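(* Fix $n\ge1$, a sample $x_1,\dots,x_n\in\mathbb{X}$ and $\epsilon\in(0,1]$, and suppose $\Gamma_\epsilon$ is nonempty and $\Gamma_\epsilon\subset A_\mu$ (so $\mu(\Gamma_\epsilon)>0$). Let $\mu_\epsilon=\mu(\cdot\mid\Gamma_\epsilon)$. Then $$D(\mu_\epsilon\|\hat\mu_{n,\epsilon})\le\frac{2\log(e/\epsilon)}{\mu(\Gamma_\epsilon)}\,V(\mu/\sigma_\epsilon,\hat\mu_n/\sigma_\epsilon).$$
   Context: $\mathbb{X}$ is a countably infinite set, $\mu$ a probability on $\mathbb{X}$ with pmf $f_\mu(x)=\mu(\{x\})$ and support $A_\mu=\{x:f_\mu(x)>0\}$. $\log$ is the logarithm to a fixed base $b>1$. I-divergence: $D(\mu\|\nu)=\sum_{x\in A_\mu}f_\mu(x)\log\frac{f_\mu(x)}{f_\nu(x)}$ if $\mu\ll\nu$, $+\infty$ otherwise. For the sample $x_1,\dots,x_n$, $\hat\mu_n(A)=\frac1n\sum_{k}\mathbb{1}_A(x_k)$; $\Gamma_\epsilon=\{x:\hat\mu_n(\{x\})\ge\epsilon\}$; $\hat\mu_{n,\epsilon}=\hat\mu_n(\cdot\mid\Gamma_\epsilon)$. $\sigma_\epsilon$ is the (finite) $\sigma$-field generated by the partition $\Pi_\epsilon=\{\{x\}:x\in\Gamma_\epsilon\}\cup\{\mathbb{X}\setminus\Gamma_\epsilon\}$, and $V(\mu/\sigma_\epsilon,\hat\mu_n/\sigma_\epsilon)=\sup_{A\in\sigma_\epsilon}|\mu(A)-\hat\mu_n(A)|$.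 *)

theory Defs
  imports "HOL-Probability.Probability"
begin

definition empirical :: "'a list \<Rightarrow> 'a pmf" where
  "empirical xs = pmf_of_multiset (mset xs)"

definition Gamma_eps :: "'a list \<Rightarrow> real \<Rightarrow> 'a set" where
  "Gamma_eps xs \<epsilon> = {x. measure_pmf.prob (empirical xs) {x} \<ge> \<epsilon>}"

definition Pi_part :: "'a set \<Rightarrow> 'a set set" where
  "Pi_part G = (\<lambda>x. {x}) ` G \<union> {UNIV - G}"

definition sigma_eps :: "'a set \<Rightarrow> 'a set set" where
  "sigma_eps G = sigma_sets UNIV (Pi_part G)"

definition Vdist :: "'a pmf \<Rightarrow> 'a pmf \<Rightarrow> 'a set \<Rightarrow> real" where
  "Vdist \<mu> \<nu> G = (SUP A \<in> sigma_eps G. \<bar>measure_pmf.prob \<mu> A - measure_pmf.prob \<nu> A\<bar>)"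

text \<open>I-divergence with logarithm to base b (value in [0,+infinity]).
  The negative parts of the series are always summable, so a non-summable
  series diverges to +infinity.\<close>
definition I_div :: "real \<Rightarrow> 'a pmf \<Rightarrow> 'a pmf \<Rightarrow> ereal" where
  "I_div b \<mu> \<nu> =
     (if set_pmf \<mu> \<subseteq> set_pmf \<nu> then
        (if (\<lambda>x. pmf \<mu> x * log b (pmf \<mu> x / pmf \<nu> x)) summable_on set_pmf \<mu>
         then ereal (\<Sum>\<^sub>\<infinity>x\<in>set_pmf \<mu>. pmf \<mu> x * log b (pmf \<mu> x / pmf \<nu> x))
         else \<infinity>)
      else \<infinity>)"

end

theory Submission
  imports Defs
begin

lemma term_bound:
  fixes p q e :: real
  assumes "0 < p" "p \<le> 1" "e \<le> q" "0 < e"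
  shows "p * ln (p / q) \<le> max (p - q) 0 * (1 + ln (1 / e))"
proof (cases "p \<le> q")
  case True
  have "p / q \<le> 1" using True assms by simp
  hence "ln (p / q) \<le> 0" using assms by simp
  hence "p * ln (p/q) \<le> 0" using assms by (simp add: mult_nonneg_nonpos)
  thus ?thesis using True by simp
next
  case False
  have q0: "q > 0" using assms by simp
  have pq: "p / q > 0" using assms q0 by simp
  have l1: "ln (p/q) \<le> p/q - 1" using ln_le_minus_one[OF pq] .
  hence l1': "q * ln (p/q) \<le> p - q" using q0
    by (metis (no_types, lifting) diff_divide_distrib divide_cancel_right divide_right_mono divide_self_if
        le_divide_eq order_less_irrefl mult.commute)
  have "p / q \<le> 1 / e" using assms q0
    by (meson frac_le less_eq_real_def zero_le_one)
  hence l2: "ln (p/q) \<le> ln (1/e)" using pq by (intro ln_mono) auto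
  have "p * ln (p/q) = (p - q) * ln (p/q) + q * ln (p/q)" by (simp add: algebra_simps)
  also have "\<dots> \<le> (p - q) * ln (1/e) + (p - q)"
    using l1' l2 False by (intro add_mono mult_left_mono) auto
  finally show ?thesis using False by (simp add: algebra_simps)
qed

lemma finite_in_sigma:
  assumes "finite A" "A \<subseteq> G"
  shows "A \<in> sigma_eps G"
  using assms
proof (induction A rule: finite_induct)
  case empty
  show ?case unfolding sigma_eps_def by (rule sigma_sets.Empty)
next
  case (insert x F)
  have "{x} \<in> sigma_eps G" unfolding sigma_eps_def Pi_part_def
    using insert.prems by (intro sigma_sets.Basic) auto
  moreover have "F \<in> sigma_eps G" using insert by auto
  ultimately have "{x} \<union> F \<in> sigma_eps G" unfolding sigma_eps_def by (rule sigma_sets_Un)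
  thus ?case by simp
qed

theorem mainTheorem11:
  fixes \<mu> :: "'a::countable pmf" and xs :: "'a list" and n :: nat and \<epsilon> b :: real
  assumes "infinite (UNIV :: 'a set)"
    and "b > 1"
    and "length xs = n" and "n \<ge> 1"
    and "0 < \<epsilon>" and "\<epsilon> \<le> 1"
    and "Gamma_eps xs \<epsilon> \<noteq> {}"
    and "Gamma_eps xs \<epsilon> \<subseteq> set_pmf \<mu>"
  shows "I_div b (cond_pmf \<mu> (Gamma_eps xs \<epsilon>)) (cond_pmf (empirical xs) (Gamma_eps xs \<epsilon>))
         \<le> ereal (2 * log b (exp 1 / \<epsilon>) / measure_pmf.prob \<mu> (Gamma_eps xs \<epsilon>)
                   * Vdist \<mu> (empirical xs) (Gamma_eps xs \<epsilon>))"
proof -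
  define \<nu> where "\<nu> = empirical xs"
  define G where "G = Gamma_eps xs \<epsilon>"
  define mG where "mG = measure_pmf.prob \<mu> G"
  define nG where "nG = measure_pmf.prob \<nu> G"
  define V where "V = Vdist \<mu> \<nu> G"
  have xsne: "mset xs \<noteq> {#}" using assms(3,4) by auto
  have setnu: "set_pmf \<nu> = set xs" unfolding \<nu>_def empirical_def using xsne by simp
  have Geps: "\<And>x. x \<in> G \<Longrightarrow> pmf \<nu> x \<ge> \<epsilon>"
    unfolding G_def Gamma_eps_def \<nu>_def by (simp add: measure_pmf_single)
  have Gnu: "G \<subseteq> set_pmf \<nu>" using Geps assms(5) by (force simp: set_pmf_iff)
  have finG: "finite G" using Gnu setnu by (metis List.finite_set finite_subset)
  have Gmu: "G \<subseteq> set_pmf \<mu>" using assms(8) G_def by simp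
  have Gne: "G \<noteq> {}" using assms(7) G_def by simp
  have mupos: "\<And>x. x \<in> G \<Longrightarrow> pmf \<mu> x > 0" using Gmu by (auto simp: set_pmf_iff intro: pmf_positive)
  have nupos: "\<And>x. x \<in> G \<Longrightarrow> pmf \<nu> x > 0" using Geps assms(5) by (meson less_le_trans)
  have mGs: "mG = sum (pmf \<mu>) G" unfolding mG_def using finG by (simp add: measure_measure_pmf_finite)
  have nGs: "nG = sum (pmf \<nu>) G" unfolding nG_def using finG by (simp add: measure_measure_pmf_finite)
  have mG0: "mG > 0" unfolding mGs using finG Gne mupos by (simp add: sum_pos)
  have nG0: "nG > 0" unfolding nGs using finG Gne nupos by (simp add: sum_pos)
  have nG1: "nG \<le> 1" unfolding nG_def by simp
  have ne1: "set_pmf \<mu> \<inter> G \<noteq> {}" using Gmu Gne by blast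
  have ne2: "set_pmf \<nu> \<inter> G \<noteq> {}" using Gnu Gne by blast
  define p where "p x = pmf \<mu> x / mG" for x
  define q where "q x = pmf \<nu> x / nG" for x
  have pc: "pmf (cond_pmf \<mu> G) x = (if x \<in> G then p x else 0)" for x
    using pmf_cond[OF ne1] p_def mG_def by simp
  have qc: "pmf (cond_pmf \<nu> G) x = (if x \<in> G then q x else 0)" for x
    using pmf_cond[OF ne2] q_def nG_def by simp
  have s1: "set_pmf (cond_pmf \<mu> G) = G" using set_cond_pmf[OF ne1] Gmu by blast
  have s2: "set_pmf (cond_pmf \<nu> G) = G" using set_cond_pmf[OF ne2] Gnu by blast
  have Idiv: "I_div b (cond_pmf \<mu> G) (cond_pmf \<nu> G) = ereal (\<Sum>x\<in>G. p x * log b (p x / q x))"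
    unfolding I_div_def s1 s2 using finG
    by (simp add: pc qc infsum_finite cong: sum.cong)
  have p0: "x \<in> G \<Longrightarrow> 0 < p x" for x using mupos mG0 p_def by simp
  have p1: "x \<in> G \<Longrightarrow> p x \<le> 1" for x
  proof -
    assume x: "x \<in> G"
    have "pmf \<mu> x \<le> mG" unfolding mGs using finG x
      by (intro member_le_sum) auto
    thus ?thesis using mG0 p_def by simp
  qed
  have qe: "x \<in> G \<Longrightarrow> \<epsilon> \<le> q x" for x
  proof -
    assume x: "x \<in> G"
    have "pmf \<nu> x \<le> pmf \<nu> x / nG" using nG0 nG1 nupos[OF x]
      by (simp add: le_divide_eq mult_le_cancel_left1)
    thus ?thesis using Geps[OF x] q_def by simp
  qed
  define L where "L = 1 + ln (1 / \<epsilon>)"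
  have L0: "L \<ge> 1" unfolding L_def using assms(5,6) by simp
  define A where "A = {x \<in> G. p x > q x}"
  have AG: "A \<subseteq> G" unfolding A_def by auto
  have finA: "finite A" using finG AG finite_subset by blast
  have lnb: "ln b > 0" using assms(2) by simp
  have step1: "(\<Sum>x\<in>G. p x * ln (p x / q x)) \<le> L * (\<Sum>x\<in>A. p x - q x)"
  proof -
    have "(\<Sum>x\<in>G. p x * ln (p x / q x)) \<le> (\<Sum>x\<in>G. max (p x - q x) 0 * L)"
      unfolding L_def by (intro sum_mono term_bound) (auto intro: p0 p1 qe assms(5))
    also have "\<dots> = L * (\<Sum>x\<in>G. max (p x - q x) 0)" by (simp add: sum_distrib_left mult.commute)
    also have "(\<Sum>x\<in>G. max (p x - q x) 0) = (\<Sum>x\<in>A. p x - q x)"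
    proof -
      have "(\<Sum>x\<in>G. max (p x - q x) 0) = (\<Sum>x\<in>A. max (p x - q x) 0)"
        using finG AG by (intro sum.mono_neutral_right) (auto simp: A_def)
      also have "\<dots> = (\<Sum>x\<in>A. p x - q x)" by (intro sum.cong) (auto simp: A_def)
      finally show ?thesis .
    qed
    finally show ?thesis .
  qed
  have bdd: "bdd_above ((\<lambda>A. \<bar>measure_pmf.prob \<mu> A - measure_pmf.prob \<nu> A\<bar>) ` sigma_eps G)"
  proof (rule bdd_aboveI)
    fix y assume "y \<in> (\<lambda>A. \<bar>measure_pmf.prob \<mu> A - measure_pmf.prob \<nu> A\<bar>) ` sigma_eps G"
    then obtain B where y: "y = \<bar>measure_pmf.prob \<mu> B - measure_pmf.prob \<nu> B\<bar>" by auto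
    have "measure_pmf.prob \<mu> B \<le> 1" "measure_pmf.prob \<nu> B \<le> 1"
         "measure_pmf.prob \<mu> B \<ge> 0" "measure_pmf.prob \<nu> B \<ge> 0" by auto
    thus "y \<le> 1" using y by linarith
  qed
  have Vb: "B \<subseteq> G \<Longrightarrow> \<bar>measure_pmf.prob \<mu> B - measure_pmf.prob \<nu> B\<bar> \<le> V" for B
    unfolding V_def Vdist_def
    by (rule cSUP_upper[OF finite_in_sigma bdd]) (use finG finite_subset in auto)
  have V1: "\<bar>mG - nG\<bar> \<le> V" using Vb[of G] mG_def nG_def by simp
  have V2: "\<bar>measure_pmf.prob \<mu> A - measure_pmf.prob \<nu> A\<bar> \<le> V" using Vb[OF AG] .
  have step2: "(\<Sum>x\<in>A. p x - q x) \<le> 2 * V / mG"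
  proof -
    define mA where "mA = measure_pmf.prob \<mu> A"
    define nA where "nA = measure_pmf.prob \<nu> A"
    have mAs: "mA = sum (pmf \<mu>) A" using finA mA_def by (simp add: measure_measure_pmf_finite)
    have nAs: "nA = sum (pmf \<nu>) A" using finA nA_def by (simp add: measure_measure_pmf_finite)
    have "(\<Sum>x\<in>A. p x - q x) = mA / mG - nA / nG"
      unfolding sum_subtractf p_def q_def mAs nAs by (simp add: sum_divide_distrib)
    have nA0: "nA \<ge> 0" using nA_def by simp
    have nAn: "nA \<le> nG" unfolding nAs nGs using finG AG
      by (intro sum_mono2) auto
    have r: "nA / nG \<le> 1" "nA / nG \<ge> 0" using nAn nA0 nG0 by auto
    have "mA - nA * mG / nG = (mA - nA) + (nA / nG) * (nG - mG)"
      using nG0 by (simp add: field_simps)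
    also have "\<dots> \<le> V + V"
    proof (intro add_mono)
      show "mA - nA \<le> V" using V2 mA_def nA_def by linarith
      have "(nA / nG) * (nG - mG) \<le> (nA / nG) * \<bar>nG - mG\<bar>" using r by (intro mult_left_mono) auto
      also have "\<dots> \<le> 1 * \<bar>nG - mG\<bar>" using r by (intro mult_right_mono) auto
      finally show "(nA / nG) * (nG - mG) \<le> V" using V1 by (simp add: abs_minus_commute)
    qed
    finally have "mA - nA * mG / nG \<le> 2 * V" by simp
    hence "(mA - nA * mG / nG) / mG \<le> 2 * V / mG" using mG0 by (intro divide_right_mono) auto
    moreover have "(mA - nA * mG / nG) / mG = mA / mG - nA / nG" using mG0 nG0 by (simp add: field_simps)
    ultimately show ?thesis using \<open>(\<Sum>x\<in>A. p x - q x) = mA / mG - nA / nG\<close> by simp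
  qed
  have main: "(\<Sum>x\<in>G. p x * log b (p x / q x)) \<le> 2 * log b (exp 1 / \<epsilon>) / mG * V"
  proof -
    have "(\<Sum>x\<in>G. p x * log b (p x / q x)) = (\<Sum>x\<in>G. p x * ln (p x / q x)) / ln b"
      unfolding log_def by (simp add: sum_divide_distrib)
    also have "\<dots> \<le> L * (2 * V / mG) / ln b"
      proof (intro divide_right_mono)
      have "L * (\<Sum>x\<in>A. p x - q x) \<le> L * (2 * V / mG)" using step2 L0 by (intro mult_left_mono) auto
      thus "(\<Sum>x\<in>G. p x * ln (p x / q x)) \<le> L * (2 * V / mG)" using step1 by linarith
    qed (use lnb in auto)
    also have "log b (exp 1 / \<epsilon>) = L / ln b"
      unfolding log_def L_def using assms(5) by (simp add: ln_div)
    hence "L * (2 * V / mG) / ln b = 2 * log b (exp 1 / \<epsilon>) / mG * V" by (simp add: field_simps)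
    finally show ?thesis .
  qed
  show ?thesis using Idiv main unfolding G_def \<nu>_def mG_def V_def by simp
qed

end
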